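(* Let $\mathcal{C}$ be a finite set of latent classes with cardinality $N_{\mathcal{C}}$, let $\rho$ be a probability distribution on $\mathcal{C}$ with $\rho(c)>0$ for all $c\in\mathcal{C}$, and for each $c\in\mathcal{C}$ let $\mathcal{D}_c$ be a distribution on a feature space $\mathcal{X}$. Then for any encoder $f:\mathcal{X}\to\mathbb{R}^d$, $$L_{\mathrm{sup}}(f,\mathcal{C}) \le L^\mu_{\mathrm{sup}}(f,\mathcal{C}) \le \frac{1}{p^\rho_{\min}} L_{\mathrm{un}}(f) + \log N_{\mathcal{C}},$$ where $p^\rho_{\min}=\min_{c\in\mathcal{C}}\rho(c)$.
   Context: Positive pairs are drawn from $\mathcal{D}_{\mathrm{sim}}(x,x^+)=\sum_{c\in\mathcal{C}}\rho(c)\mathcal{D}_c(x)\mathcal{D}_c(x^+)$ and negatives from $\mathcal{D}_{\mathrm{neg}}(x^-)=\sum_{c\in\mathcal{C}}\rho(c)\mathcal{D}_c(x^-)$. The unsupervised loss with one negative is $$L_{\mathrm{un}}(f)=\mathbb{E}_{(x,x^+)\sim\mathcal{D}_{\mathrm{sim}},\,x^-\sim\mathcal{D}_{\mathrm{neg}}}\Big[-\log\frac{\exp(f(x)^Tf(x^+))}{\exp(f(x)^Tf(x^+))+\exp(f(x)^Tf(x^-))}\Big].$$ With $\mathcal{D}_{\mathcal{C}}(x,c)=\rho(c)\mathcal{D}_c(x)$, the supervised loss is $$L_{\mathrm{sup}}(f,\mathcal{C})=\inf_{W\in\mathbb{R}^{N_{\mathcal{C}}\times d}}\mathbb{E}_{(x,c)\sim\mathcal{D}_{\mathcal{C}}}\Big[-\log\frac{\exp((Wf(x))_c)}{\sum_{c'\in\mathcal{C}}\exp((Wf(x))_{c'})}\Big],$$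 and $L^\mu_{\mathrm{sup}}(f,\mathcal{C})$ is the same expectation evaluated at the mean classifier $W^\mu$ whose row indexed by $c$ is $\mu_c=\mathbb{E}_{x\sim\mathcal{D}_c}[f(x)]$ (no infimum). *)

theory Defs
  imports "HOL-Probability.Probability"
begin

text \<open>Classes have type 'c, the finite set of
latent classes is C, rho :: 'c => real is the class distribution, and D c is the
class-conditional distribution (a probability measure on the feature space).\<close>

text \<open>Per-sample losses (both are nonnegative, hence no truncation by ennreal).\<close>
definition un_loss :: "('a \<Rightarrow> real^'d) \<Rightarrow> 'a \<Rightarrow> 'a \<Rightarrow> 'a \<Rightarrow> real" where
  "un_loss f x xp xn =
     - ln (exp (f x \<bullet> f xp) / (exp (f x \<bullet> f xp) + exp (f x \<bullet> f xn)))"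

definition sup_loss :: "'c set \<Rightarrow> ('c \<Rightarrow> real^'d) \<Rightarrow> ('a \<Rightarrow> real^'d) \<Rightarrow> 'a \<Rightarrow> 'c \<Rightarrow> real" where
  "sup_loss C W f x c =
     - ln (exp (W c \<bullet> f x) / (\<Sum>c'\<in>C. exp (W c' \<bullet> f x)))"

text \<open>Unsupervised loss: expectation over (x,x+) ~ D_sim and x- ~ D_neg, where
D_sim = sum_c rho(c) D_c(x) D_c(x+) and D_neg = sum_c rho(c) D_c(x-), written out.\<close>
definition L_un :: "'c set \<Rightarrow> ('c \<Rightarrow> real) \<Rightarrow> ('c \<Rightarrow> 'a measure) \<Rightarrow> ('a \<Rightarrow> real^'d) \<Rightarrow> ennreal" where
  "L_un C \<rho> D f =
     (\<Sum>c\<in>C. \<Sum>c'\<in>C. ennreal (\<rho> c * \<rho> c') *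
        (\<integral>\<^sup>+ x. \<integral>\<^sup>+ xp. \<integral>\<^sup>+ xn. ennreal (un_loss f x xp xn) \<partial>D c' \<partial>D c \<partial>D c))"

text \<open>Supervised loss of the linear classifier W (row c of W is W c), under
D_C(x,c) = rho(c) D_c(x).\<close>
definition L_sup_W :: "'c set \<Rightarrow> ('c \<Rightarrow> real) \<Rightarrow> ('c \<Rightarrow> 'a measure) \<Rightarrow> ('a \<Rightarrow> real^'d)
    \<Rightarrow> ('c \<Rightarrow> real^'d) \<Rightarrow> ennreal" where
  "L_sup_W C \<rho> D f W =
     (\<Sum>c\<in>C. ennreal (\<rho> c) * (\<integral>\<^sup>+ x. ennreal (sup_loss C W f x c) \<partial>D c))"

definition L_sup :: "'c set \<Rightarrow> ('c \<Rightarrow> real) \<Rightarrow> ('c \<Rightarrow> 'a measure) \<Rightarrow> ('a \<Rightarrow> real^'d) \<Rightarrow> ennreal" where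
  "L_sup C \<rho> D f = (INF W. L_sup_W C \<rho> D f W)"

definition mean_classifier :: "('c \<Rightarrow> 'a measure) \<Rightarrow> ('a \<Rightarrow> real^'d) \<Rightarrow> 'c \<Rightarrow> real^'d" where
  "mean_classifier D f c = (\<integral> x. f x \<partial>D c)"

definition L_sup_mu :: "'c set \<Rightarrow> ('c \<Rightarrow> real) \<Rightarrow> ('c \<Rightarrow> 'a measure) \<Rightarrow> ('a \<Rightarrow> real^'d) \<Rightarrow> ennreal" where
  "L_sup_mu C \<rho> D f = L_sup_W C \<rho> D f (mean_classifier D f)"

end

theory Submission
  imports Defs
begin

definition phi :: "real \<Rightarrow> real" where "phi t = ln (1 + exp t)"

lemma phi_nonneg: "phi t \<ge> 0" unfolding phi_def by simp

lemma phi_ge: "t \<le> phi t"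
proof -
  have "exp t \<le> 1 + exp t" by simp
  have "0 < 1 + exp t" by (metis add_pos_pos exp_gt_zero zero_less_one)
  hence "ln (exp t) \<le> ln (1 + exp t)" using \<open>exp t \<le> 1 + exp t\<close> by (subst ln_le_cancel_iff) auto
  thus ?thesis by (simp add: phi_def)
qed

lemma phi_tangent: "phi s + exp s / (1 + exp s) * (t - s) \<le> phi t"
proof -
  define p where "p = exp s / (1 + exp s)"
  have pos: "0 < 1 + exp s" by (metis add_pos_pos exp_gt_zero zero_less_one)
  have p0: "0 \<le> p" and p1: "p \<le> 1" unfolding p_def using pos by (auto simp: divide_simps)
  have "exp ((1 - p) *\<^sub>R 0 + p *\<^sub>R (t - s)) \<le> (1 - p) * exp 0 + p * exp (t - s)"
    by (rule convex_onD[OF exp_convex]) (use p0 p1 in auto)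
  hence e: "exp (p * (t - s)) \<le> (1 - p) + p * exp (t - s)" by simp
  have "(1 - p) + p * exp (t - s) = (1 + exp t) / (1 + exp s)"
    unfolding p_def using pos by (simp add: field_simps exp_diff)
  have post: "0 < 1 + exp t" by (metis add_pos_pos exp_gt_zero zero_less_one)
  note e
  moreover have "(1 - p) + p * exp (t - s) = (1 + exp t) / (1 + exp s)"
    unfolding p_def using pos by (simp add: field_simps exp_diff)
  ultimately have le: "exp (p * (t - s)) \<le> (1 + exp t) / (1 + exp s)" by simp
  have "p * (t - s) = ln (exp (p * (t - s)))" by simp
  also have "\<dots> \<le> ln ((1 + exp t) / (1 + exp s))"
    using le pos post by (subst ln_le_cancel_iff) auto
  also have "\<dots> = phi t - phi s" unfolding phi_def
    using pos post by (simp add: ln_div)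
  finally show ?thesis unfolding p_def by simp
qed

lemma jensen_phi:
  assumes M: "prob_space M" and h: "integrable M h"
  shows "ennreal (phi (\<integral>y. h y \<partial>M)) \<le> (\<integral>\<^sup>+ y. ennreal (phi (h y)) \<partial>M)"
proof -
  interpret prob_space M by (rule M)
  show ?thesis
proof (cases "(\<integral>\<^sup>+ y. ennreal (phi (h y)) \<partial>M) = \<infinity>")
  case True then show ?thesis by simp
next
  case False
  then obtain r where r: "(\<integral>\<^sup>+ y. ennreal (phi (h y)) \<partial>M) = ennreal r"
    by (cases "(\<integral>\<^sup>+ y. ennreal (phi (h y)) \<partial>M)") auto
  have hm: "h \<in> borel_measurable M" using h by auto
  have pm: "(\<lambda>y. phi (h y)) \<in> borel_measurable M" unfolding phi_def using hm by measurable
  have ip: "integrable M (\<lambda>y. phi (h y))"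
    by (rule integrableI_nn_integral_finite[OF pm _ r]) (simp add: phi_nonneg)
  define t0 where "t0 = (\<integral>y. h y \<partial>M)"
  define q where "q = exp t0 / (1 + exp t0)"
  have iL: "integrable M (\<lambda>y. phi t0 + q * (h y - t0))" using h M
    by (intro Bochner_Integration.integrable_add Bochner_Integration.integrable_diff integrable_mult_right) auto
  have "(\<integral>y. phi t0 + q * (h y - t0) \<partial>M) = phi t0"
    using h M by (simp add: t0_def prob_space)
  hence "phi t0 \<le> (\<integral>y. phi (h y) \<partial>M)"
    using integral_mono[OF iL ip phi_tangent[of t0, folded q_def]] by simp
  moreover have "(\<integral>\<^sup>+ y. ennreal (phi (h y)) \<partial>M) = ennreal (\<integral>y. phi (h y) \<partial>M)"
    by (rule nn_integral_eq_integral[OF ip]) (simp add: phi_nonneg)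
  ultimately show ?thesis unfolding t0_def by (metis ennreal_leI)
qed
qed

lemma un_loss_phi: "un_loss f x xp xn = phi (f x \<bullet> f xn - f x \<bullet> f xp)"
proof -
  define a where "a = f x \<bullet> f xp"
  define b where "b = f x \<bullet> f xn"
  have "exp a / (exp a + exp b) = inverse (1 + exp (b - a))"
    by (simp add: exp_diff field_simps add_pos_pos)
  hence "- ln (exp a / (exp a + exp b)) = ln (1 + exp (b - a))"
    by (simp add: ln_inverse add_pos_pos)
  thus ?thesis unfolding un_loss_def phi_def a_def b_def by simp
qed

lemma sup_pt:
  fixes W :: "'c \<Rightarrow> real^'d"
  assumes fin: "finite C" and cC: "c \<in> C" and pos: "\<And>c. c \<in> C \<Longrightarrow> \<rho> c > 0"
  shows "sup_loss C W f x c \<le> ln (real (card C))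
     + (1 / Min (\<rho> ` C)) * (\<Sum>c'\<in>C. \<rho> c' * phi (f x \<bullet> W c' - f x \<bullet> W c))"
proof -
  define pm where "pm = Min (\<rho> ` C)"
  have ne: "C \<noteq> {}" using cC by auto
  have pmin: "pm \<in> \<rho> ` C" unfolding pm_def using fin ne by (intro Min_in) auto
  hence pm0: "pm > 0" using pos by auto
  have pmle: "\<And>c'. c' \<in> C \<Longrightarrow> pm \<le> \<rho> c'" unfolding pm_def using fin by auto
  define a where "a c' = f x \<bullet> W c' - f x \<bullet> W c" for c'
  define S where "S = (\<Sum>c'\<in>C. exp (W c' \<bullet> f x))"
  have S_eq: "S = exp (W c \<bullet> f x) * (\<Sum>c'\<in>C. exp (a c'))"
    unfolding S_def a_def by (simp add: sum_distrib_left exp_diff inner_commute)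
  have Spos: "0 < (\<Sum>c'\<in>C. exp (a c'))" using fin ne by (intro sum_pos) auto
  have "sup_loss C W f x c = ln (\<Sum>c'\<in>C. exp (a c'))"
    unfolding sup_loss_def S_def[symmetric] S_eq using Spos
    by (simp add: ln_div ln_mult)
  also have "\<dots> \<le> ln (real (card C) * exp (\<Sum>c'\<in>C. phi (a c')))"
  proof (subst ln_le_cancel_iff)
    show "0 < (\<Sum>c'\<in>C. exp (a c'))" by fact
    show "0 < real (card C) * exp (\<Sum>c'\<in>C. phi (a c'))" using fin ne by (simp add: card_gt_0_iff)
    have "(\<Sum>c'\<in>C. exp (a c')) \<le> (\<Sum>c'\<in>C. exp (\<Sum>c'\<in>C. phi (a c')))"
    proof (rule sum_mono)
      fix c' assume "c' \<in> C"
      have "a c' \<le> phi (a c')" by (rule phi_ge)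
      also have "\<dots> \<le> (\<Sum>c'\<in>C. phi (a c'))"
        using fin \<open>c' \<in> C\<close> by (intro member_le_sum) (auto simp: phi_nonneg)
      finally show "exp (a c') \<le> exp (\<Sum>c'\<in>C. phi (a c'))" by simp
    qed
    thus "(\<Sum>c'\<in>C. exp (a c')) \<le> real (card C) * exp (\<Sum>c'\<in>C. phi (a c'))" by simp
  qed
  also have "\<dots> = ln (real (card C)) + (\<Sum>c'\<in>C. phi (a c'))"
    using fin ne by (simp add: ln_mult card_gt_0_iff)
  also have "(\<Sum>c'\<in>C. phi (a c')) \<le> (\<Sum>c'\<in>C. (1 / pm) * (\<rho> c' * phi (a c')))"
  proof (rule sum_mono)
    fix c' assume c': "c' \<in> C"
    have "1 \<le> \<rho> c' / pm" using pmle[OF c'] pm0 by simp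
    hence "1 * phi (a c') \<le> (\<rho> c' / pm) * phi (a c')"
      by (intro mult_right_mono) (auto simp: phi_nonneg)
    thus "phi (a c') \<le> (1 / pm) * (\<rho> c' * phi (a c'))" by simp
  qed
  finally show ?thesis unfolding pm_def[symmetric] a_def by (simp add: sum_distrib_left)
qed

theorem lemma3p1:
  fixes C :: "'c set" and \<rho> :: "'c \<Rightarrow> real" and X :: "'a measure"
    and D :: "'c \<Rightarrow> 'a measure" and f :: "'a \<Rightarrow> real^'d"
  assumes "finite C" and "C \<noteq> {}"
    and "\<And>c. c \<in> C \<Longrightarrow> \<rho> c > 0" and "(\<Sum>c\<in>C. \<rho> c) = 1"
    and "\<And>c. c \<in> C \<Longrightarrow> prob_space (D c)"
    and "\<And>c. c \<in> C \<Longrightarrow> sets (D c) = sets X"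
    and "f \<in> borel_measurable X"
    and "\<And>c. c \<in> C \<Longrightarrow> integrable (D c) f"
  shows "L_sup C \<rho> D f \<le> L_sup_mu C \<rho> D f
     \<and> L_sup_mu C \<rho> D f
         \<le> ennreal (1 / Min (\<rho> ` C)) * L_un C \<rho> D f + ennreal (ln (real (card C)))"
proof
  show "L_sup C \<rho> D f \<le> L_sup_mu C \<rho> D f"
    unfolding L_sup_def L_sup_mu_def by (rule INF_lower) simp
next
  note fin = assms(1) and ne = assms(2) and pos = assms(3) and sum1 = assms(4)
    and ps = assms(5) and sets = assms(6) and fX = assms(7) and intf = assms(8)
  define \<mu> where "\<mu> = mean_classifier D f"
  define pm where "pm = Min (\<rho> ` C)"
  define N where "N = ln (real (card C))"
  have pmin: "pm \<in> \<rho> ` C" unfolding pm_def using fin ne by (intro Min_in) auto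
  hence pm0: "pm > 0" using pos by auto
  have N0: "N \<ge> 0" unfolding N_def using fin ne card_gt_0_iff[of C] by (simp add: Suc_le_eq)
  define I where "I c c' = (\<integral>\<^sup>+ x. ennreal (phi (f x \<bullet> \<mu> c' - f x \<bullet> \<mu> c)) \<partial>D c)" for c c'
  have fm: "f \<in> borel_measurable (D c)" if "c \<in> C" for c
    by (subst measurable_cong_sets[OF sets[OF that] refl]) (rule fX)
  have gm: "(\<lambda>x. ennreal (phi (f x \<bullet> v - f x \<bullet> w))) \<in> borel_measurable (D c)"
    if "c \<in> C" for c v w
  proof -
    note fm[OF that, measurable]
    show ?thesis unfolding phi_def by measurable
  qed
  have step1: "(\<integral>\<^sup>+ x. ennreal (sup_loss C \<mu> f x c) \<partial>D c)
      \<le> ennreal N + ennreal (1 / pm) * (\<Sum>c'\<in>C. ennreal (\<rho> c') * I c c')" if c: "c \<in> C" for c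
  proof -
    interpret prob_space "D c" using ps[OF c] .
    have "(\<integral>\<^sup>+ x. ennreal (sup_loss C \<mu> f x c) \<partial>D c)
       \<le> (\<integral>\<^sup>+ x. ennreal N + ennreal (1 / pm) * (\<Sum>c'\<in>C. ennreal (\<rho> c') *
             ennreal (phi (f x \<bullet> \<mu> c' - f x \<bullet> \<mu> c))) \<partial>D c)"
    proof (rule nn_integral_mono)
      fix x
      have "ennreal (sup_loss C \<mu> f x c) \<le> ennreal (N + (1 / pm) *
          (\<Sum>c'\<in>C. \<rho> c' * phi (f x \<bullet> \<mu> c' - f x \<bullet> \<mu> c)))"
        using sup_pt[OF fin c pos, where W=\<mu> and f=f and x=x] unfolding N_def pm_def by (intro ennreal_leI) auto
      also have "\<dots> = ennreal N + ennreal (1 / pm) * (\<Sum>c'\<in>C. ennreal (\<rho> c') *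
             ennreal (phi (f x \<bullet> \<mu> c' - f x \<bullet> \<mu> c)))"
      proof -
        let ?g = "\<lambda>c'. \<rho> c' * phi (f x \<bullet> \<mu> c' - f x \<bullet> \<mu> c)"
        have g0: "\<And>c'. c' \<in> C \<Longrightarrow> 0 \<le> ?g c'"
          using pos by (simp add: phi_nonneg less_imp_le)
        have S0: "0 \<le> sum ?g C" using g0 by (rule sum_nonneg)
        have "ennreal (N + (1 / pm) * sum ?g C) = ennreal N + ennreal (1 / pm) * ennreal (sum ?g C)"
        proof -
          have e1: "ennreal (N + (1 / pm) * sum ?g C) = ennreal N + ennreal ((1 / pm) * sum ?g C)"
            by (rule ennreal_plus) (use N0 pm0 S0 in auto)
          have e2: "ennreal ((1 / pm) * sum ?g C) = ennreal (1 / pm) * ennreal (sum ?g C)"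
            by (rule ennreal_mult') (use pm0 in simp)
          show ?thesis by (simp only: e1 e2)
        qed
        also have "ennreal (sum ?g C) = (\<Sum>c'\<in>C. ennreal (?g c'))"
          using g0 by simp
        also have "\<dots> = (\<Sum>c'\<in>C. ennreal (\<rho> c') * ennreal (phi (f x \<bullet> \<mu> c' - f x \<bullet> \<mu> c)))"
          using pos by (intro sum.cong refl) (simp add: ennreal_mult less_imp_le phi_nonneg)
        finally show ?thesis .
      qed
      finally show "ennreal (sup_loss C \<mu> f x c) \<le> \<dots>" .
    qed
    also have "\<dots> = ennreal N + ennreal (1 / pm) * (\<Sum>c'\<in>C. ennreal (\<rho> c') * I c c')"
      using gm[OF c] unfolding I_def
      by (simp add: nn_integral_add nn_integral_cmult nn_integral_sum emeasure_space_1)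
    finally show ?thesis .
  qed
  have Jen: "ennreal (phi (f x \<bullet> \<mu> c' - f x \<bullet> \<mu> c))
      \<le> (\<integral>\<^sup>+ xp. \<integral>\<^sup>+ xn. ennreal (un_loss f x xp xn) \<partial>D c' \<partial>D c)"
    if c: "c \<in> C" and c': "c' \<in> C" for c c' x
  proof -
    have inner: "ennreal (phi (f x \<bullet> \<mu> c' - f x \<bullet> f xp))
        \<le> (\<integral>\<^sup>+ xn. ennreal (un_loss f x xp xn) \<partial>D c')" for xp
    proof -
      interpret prob_space "D c'" using ps[OF c'] .
      have "(\<integral>xn. f x \<bullet> f xn - f x \<bullet> f xp \<partial>D c') = f x \<bullet> \<mu> c' - f x \<bullet> f xp"
        using intf[OF c'] by (simp add: \<mu>_def mean_classifier_def prob_space)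
      moreover have "integrable (D c') (\<lambda>xn. f x \<bullet> f xn - f x \<bullet> f xp)"
        using intf[OF c'] by auto
      ultimately show ?thesis
        using jensen_phi[OF ps[OF c'], of "\<lambda>xn. f x \<bullet> f xn - f x \<bullet> f xp"]
        by (simp add: un_loss_phi)
    qed
    have "ennreal (phi (f x \<bullet> \<mu> c' - f x \<bullet> \<mu> c))
        \<le> (\<integral>\<^sup>+ xp. ennreal (phi (f x \<bullet> \<mu> c' - f x \<bullet> f xp)) \<partial>D c)"
    proof -
      interpret prob_space "D c" using ps[OF c] .
      have "(\<integral>xp. f x \<bullet> \<mu> c' - f x \<bullet> f xp \<partial>D c) = f x \<bullet> \<mu> c' - f x \<bullet> \<mu> c"
        using intf[OF c] by (simp add: \<mu>_def mean_classifier_def prob_space)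
      moreover have "integrable (D c) (\<lambda>xp. f x \<bullet> \<mu> c' - f x \<bullet> f xp)"
        using intf[OF c] by auto
      ultimately show ?thesis
        using jensen_phi[OF ps[OF c], of "\<lambda>xp. f x \<bullet> \<mu> c' - f x \<bullet> f xp"] by simp
    qed
    also have "\<dots> \<le> (\<integral>\<^sup>+ xp. \<integral>\<^sup>+ xn. ennreal (un_loss f x xp xn) \<partial>D c' \<partial>D c)"
      by (intro nn_integral_mono inner)
    finally show ?thesis .
  qed
  have Lun: "(\<Sum>c\<in>C. \<Sum>c'\<in>C. ennreal (\<rho> c) * (ennreal (\<rho> c') * I c c')) \<le> L_un C \<rho> D f"
    unfolding L_un_def
  proof (intro sum_mono)
    fix c c' assume c: "c \<in> C" and c': "c' \<in> C"
    have "ennreal (\<rho> c) * (ennreal (\<rho> c') * I c c') = ennreal (\<rho> c * \<rho> c') * I c c'"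
      using pos[OF c] pos[OF c'] by (simp add: ennreal_mult mult.assoc)
    also have "\<dots> \<le> ennreal (\<rho> c * \<rho> c') *
        (\<integral>\<^sup>+ x. \<integral>\<^sup>+ xp. \<integral>\<^sup>+ xn. ennreal (un_loss f x xp xn) \<partial>D c' \<partial>D c \<partial>D c)"
      unfolding I_def by (intro mult_left_mono nn_integral_mono Jen[OF c c']) auto
    finally show "ennreal (\<rho> c) * (ennreal (\<rho> c') * I c c') \<le> \<dots>" .
  qed
  have rsum: "(\<Sum>c\<in>C. ennreal (\<rho> c)) = 1"
    using sum1 pos by (subst sum_ennreal) (auto simp: less_imp_le)
  have "L_sup_mu C \<rho> D f = (\<Sum>c\<in>C. ennreal (\<rho> c) * (\<integral>\<^sup>+ x. ennreal (sup_loss C \<mu> f x c) \<partial>D c))"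
    unfolding L_sup_mu_def L_sup_W_def \<mu>_def ..
  also have "\<dots> \<le> (\<Sum>c\<in>C. ennreal (\<rho> c) * (ennreal N + ennreal (1 / pm) * (\<Sum>c'\<in>C. ennreal (\<rho> c') * I c c')))"
    by (intro sum_mono mult_left_mono step1) auto
  also have "\<dots> = ennreal N * (\<Sum>c\<in>C. ennreal (\<rho> c))
      + ennreal (1 / pm) * (\<Sum>c\<in>C. \<Sum>c'\<in>C. ennreal (\<rho> c) * (ennreal (\<rho> c') * I c c'))"
    by (simp add: distrib_left sum.distrib sum_distrib_left sum_distrib_right mult_ac)
  also have "\<dots> \<le> ennreal N + ennreal (1 / pm) * L_un C \<rho> D f"
    unfolding rsum by (intro add_mono mult_left_mono Lun) auto
  finally show "L_sup_mu C \<rho> D f \<le> ennreal (1 / Min (\<rho> ` C)) * L_un C \<rho> D f + ennreal (ln (real (card C)))"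
    unfolding pm_def N_def by (simp add: add.commute)
qed

end
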